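(* Let $\alpha\in\ell^2$ and $\epsilon>0$, and suppose that the $(\epsilon,L)$-sequence associated with $\alpha$ and $\epsilon$ has finite length $N$. Then $a_{2N+2}(R_\alpha)\le\epsilon/\sqrt2$.
   Context: $\mathbb{N}=\{0,1,2,\dots\}$; $\ell^2$ is the space of square-summable functions $\mathbb{N}\to\mathbb{C}$; $(R_\alpha f)(k)=\alpha_k\sum_{j=0}^kf(j)$. Approximation numbers: $a_{n+1}(T)=\inf\{\|T-P\|:P$ linear on $\ell^2$ with rank $\le n\}$, $\|\cdot\|$ the operator norm. For a finite natural interval $I$: $\mu(I)=\sum_{k\in I}|\alpha_k|^2$, $\|f\|_{2,I}=(\sum_{k\in I}|f(k)|^2)^{1/2}$, $l(I,f)=\sum_{k\in I}\sum_{n\in I\setminus\{k\}}|\alpha_k\alpha_n\sum_{j=\min(k,n)+1}^{\max(k,n)}f(j)|^2$, $L(I)=(\sup_{\|f\|_{2,I}\le1}l(I,f)/\mu(I))^{1/2}$ (sup over $f$ supported in $I$; $L(I)=0$ if $\alpha$ vanishes on $I$). $(\epsilon,L)$-sequence: $c_0=0$ and $c_{k+1}=\inf\{t\in\mathbb{N}:t>c_k,\ L([c_k,t-1])>\epsilon\}$ (with $\inf\emptyset=+\infty$). It has finite length $N$ if $c_N<\infty$ and $c_{N+1}=+\infty$. *)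

theory Defs
  imports "HOL-Analysis.Analysis" "HOL-Library.Extended_Nat"
begin

definition l2 :: "(nat \<Rightarrow> complex) set" where
  "l2 = {f. summable (\<lambda>k. (cmod (f k))\<^sup>2)}"

definition l2norm :: "(nat \<Rightarrow> complex) \<Rightarrow> real" where
  "l2norm f = sqrt (\<Sum>k. (cmod (f k))\<^sup>2)"

definition R_op :: "(nat \<Rightarrow> complex) \<Rightarrow> (nat \<Rightarrow> complex) \<Rightarrow> (nat \<Rightarrow> complex)" where
  "R_op \<alpha> f = (\<lambda>k. \<alpha> k * (\<Sum>j\<le>k. f j))"

definition op_norm :: "((nat \<Rightarrow> complex) \<Rightarrow> (nat \<Rightarrow> complex)) \<Rightarrow> ereal" where
  "op_norm T = (SUP f\<in>{f\<in>l2. l2norm f \<le> 1}.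
      (if T f \<in> l2 then ereal (l2norm (T f)) else \<infinity>))"

definition l2_linear :: "((nat \<Rightarrow> complex) \<Rightarrow> (nat \<Rightarrow> complex)) \<Rightarrow> bool" where
  "l2_linear P \<longleftrightarrow> (\<forall>f\<in>l2. P f \<in> l2) \<and>
     (\<forall>f\<in>l2. \<forall>g\<in>l2. P (\<lambda>k. f k + g k) = (\<lambda>k. P f k + P g k)) \<and>
     (\<forall>c. \<forall>f\<in>l2. P (\<lambda>k. c * f k) = (\<lambda>k. c * P f k))"

definition rank_le :: "((nat \<Rightarrow> complex) \<Rightarrow> (nat \<Rightarrow> complex)) \<Rightarrow> nat \<Rightarrow> bool" where
  "rank_le P n \<longleftrightarrow> (\<exists>b :: nat \<Rightarrow> (nat \<Rightarrow> complex).
      \<forall>f\<in>l2. \<exists>c :: nat \<Rightarrow> complex. P f = (\<lambda>k. \<Sum>i<n. c i * b i k))"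

text \<open>Approximation numbers: approx_num m T = a_m(T) for m >= 1, i.e.
  a_(n+1)(T) = inf { norm(T - P) : P linear on l2, rank P <= n }.\<close>

definition approx_num :: "nat \<Rightarrow> ((nat \<Rightarrow> complex) \<Rightarrow> (nat \<Rightarrow> complex)) \<Rightarrow> ereal" where
  "approx_num m T = (INF P\<in>{P. l2_linear P \<and> rank_le P (m - 1)}. op_norm (\<lambda>f k. T f k - P f k))"

definition mu :: "(nat \<Rightarrow> complex) \<Rightarrow> nat set \<Rightarrow> real" where
  "mu \<alpha> I = (\<Sum>k\<in>I. (cmod (\<alpha> k))\<^sup>2)"

definition norm2_on :: "nat set \<Rightarrow> (nat \<Rightarrow> complex) \<Rightarrow> real" where
  "norm2_on I f = sqrt (\<Sum>k\<in>I. (cmod (f k))\<^sup>2)"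

definition l_fun :: "(nat \<Rightarrow> complex) \<Rightarrow> nat set \<Rightarrow> (nat \<Rightarrow> complex) \<Rightarrow> real" where
  "l_fun \<alpha> I f = (\<Sum>k\<in>I. \<Sum>n\<in>I - {k}.
      (cmod (\<alpha> k * \<alpha> n * (\<Sum>j\<in>{min k n + 1..max k n}. f j)))\<^sup>2)"

definition L_fun :: "(nat \<Rightarrow> complex) \<Rightarrow> nat set \<Rightarrow> real" where
  "L_fun \<alpha> I = (if (\<forall>k\<in>I. \<alpha> k = 0) then 0 else
      sqrt (Sup {l_fun \<alpha> I f / mu \<alpha> I | f. (\<forall>k. k \<notin> I \<longrightarrow> f k = 0) \<and> norm2_on I f \<le> 1}))"

fun eps_L_seq :: "(nat \<Rightarrow> complex) \<Rightarrow> real \<Rightarrow> nat \<Rightarrow> enat" where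
  "eps_L_seq \<alpha> \<epsilon> 0 = 0"
| "eps_L_seq \<alpha> \<epsilon> (Suc k) =
     (if eps_L_seq \<alpha> \<epsilon> k = \<infinity> then \<infinity>
      else (let c = the_enat (eps_L_seq \<alpha> \<epsilon> k) in
        if (\<exists>t. t > c \<and> L_fun \<alpha> {c..t - 1} > \<epsilon>)
        then enat (LEAST t. t > c \<and> L_fun \<alpha> {c..t - 1} > \<epsilon>)
        else \<infinity>))"

definition has_finite_length :: "(nat \<Rightarrow> complex) \<Rightarrow> real \<Rightarrow> nat \<Rightarrow> bool" where
  "has_finite_length \<alpha> \<epsilon> N \<longleftrightarrow> eps_L_seq \<alpha> \<epsilon> N < \<infinity> \<and> eps_L_seq \<alpha> \<epsilon> (Suc N) = \<infinity>"

end

theory Submission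
  imports Defs
begin


definition psum :: "(nat \<Rightarrow> complex) \<Rightarrow> nat \<Rightarrow> complex" where
  "psum f k = (\<Sum>j\<le>k. f j)"

definition wt :: "(nat \<Rightarrow> complex) \<Rightarrow> nat \<Rightarrow> real" where
  "wt \<alpha> k = (cmod (\<alpha> k))\<^sup>2"

lemma wt_nonneg[simp]: "0 \<le> wt \<alpha> k" by (simp add: wt_def)

lemma psum_diff:
  assumes "k \<le> n" shows "(\<Sum>j\<in>{k+1..n}. f j) = psum f n - psum f k"
proof -
  have "psum f n = sum f {0..<Suc n}" unfolding psum_def by (simp add: atLeast0LessThan lessThan_Suc_atMost)
  moreover have "psum f k = sum f {0..<Suc k}" unfolding psum_def by (simp add: atLeast0LessThan lessThan_Suc_atMost)
  moreover have "{k+1..n} = {Suc k..<Suc n}" by auto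
  ultimately show ?thesis using sum_diff_nat_ivl[of 0 "Suc k" "Suc n" f] assms by simp
qed

lemma cmod_seg: "cmod (\<Sum>j\<in>{Suc (min k n)..max k n}. f j) = cmod (psum f k - psum f n)"
proof (cases "k \<le> n")
  case True then show ?thesis using psum_diff[OF True, of f] by (simp add: norm_minus_commute)
next
  case False then have "n \<le> k" by simp
  then show ?thesis using psum_diff[OF \<open>n \<le> k\<close>, of f] False by (simp add: norm_minus_commute)
qed

lemma lfun_eq:
  assumes "finite I"
  shows "l_fun \<alpha> I f = (\<Sum>k\<in>I. \<Sum>n\<in>I. wt \<alpha> k * wt \<alpha> n * (cmod (psum f k - psum f n))\<^sup>2)"
  unfolding l_fun_def
proof (rule sum.cong[OF refl])
  fix k assume k: "k \<in> I"
  have "(\<Sum>n\<in>I - {k}. (cmod (\<alpha> k * \<alpha> n * (\<Sum>j\<in>{min k n + 1..max k n}. f j)))\<^sup>2)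
      = (\<Sum>n\<in>I - {k}. wt \<alpha> k * wt \<alpha> n * (cmod (psum f k - psum f n))\<^sup>2)"
    by (rule sum.cong[OF refl]) (simp add: norm_mult power_mult_distrib cmod_seg wt_def)
  also have "\<dots> = (\<Sum>n\<in>I. wt \<alpha> k * wt \<alpha> n * (cmod (psum f k - psum f n))\<^sup>2)"
    using sum.remove[OF assms k, of "\<lambda>n. wt \<alpha> k * wt \<alpha> n * (cmod (psum f k - psum f n))\<^sup>2"] by simp
  finally show "(\<Sum>n\<in>I - {k}. (cmod (\<alpha> k * \<alpha> n * (\<Sum>j\<in>{min k n + 1..max k n}. f j)))\<^sup>2)
      = (\<Sum>n\<in>I. wt \<alpha> k * wt \<alpha> n * (cmod (psum f k - psum f n))\<^sup>2)" .
qed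

lemma var_id_real:
  fixes w y :: "nat \<Rightarrow> real"
  shows "2 * (\<Sum>k\<in>I. w k) * (\<Sum>k\<in>I. w k * (y k)\<^sup>2) =
    (\<Sum>k\<in>I. \<Sum>n\<in>I. w k * w n * (y k - y n)\<^sup>2) + 2 * (\<Sum>n\<in>I. w n * y n)\<^sup>2"
proof -
  have e: "w k * w n * (y k - y n)\<^sup>2 = w n * (w k * (y k)\<^sup>2) + w k * (w n * (y n)\<^sup>2) - 2 * ((w k * y k) * (w n * y n))" for k n
    by (simp add: power2_eq_square algebra_simps)
  have "(\<Sum>k\<in>I. \<Sum>n\<in>I. w k * w n * (y k - y n)\<^sup>2)
     = (\<Sum>k\<in>I. \<Sum>n\<in>I. w n * (w k * (y k)\<^sup>2) + w k * (w n * (y n)\<^sup>2) - 2 * ((w k * y k) * (w n * y n)))"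
    by (simp add: e)
  also have "\<dots> = (\<Sum>k\<in>I. \<Sum>n\<in>I. w n * (w k * (y k)\<^sup>2)) + (\<Sum>k\<in>I. \<Sum>n\<in>I. w k * (w n * (y n)\<^sup>2))
      - 2 * (\<Sum>k\<in>I. \<Sum>n\<in>I. (w k * y k) * (w n * y n))"
    by (simp only: sum.distrib sum_subtractf sum_distrib_left)
  also have "(\<Sum>k\<in>I. \<Sum>n\<in>I. w n * (w k * (y k)\<^sup>2)) = (\<Sum>k\<in>I. w k) * (\<Sum>k\<in>I. w k * (y k)\<^sup>2)"
    by (simp add: sum_product) (rule sum.swap)
  also have "(\<Sum>k\<in>I. \<Sum>n\<in>I. w k * (w n * (y n)\<^sup>2)) = (\<Sum>k\<in>I. w k) * (\<Sum>k\<in>I. w k * (y k)\<^sup>2)"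
    by (simp add: sum_product)
  also have "(\<Sum>k\<in>I. \<Sum>n\<in>I. (w k * y k) * (w n * y n)) = (\<Sum>n\<in>I. w n * y n)\<^sup>2"
    by (simp add: sum_product power2_eq_square)
  finally show ?thesis by simp
qed

lemma var_id:
  fixes y :: "nat \<Rightarrow> complex" and w :: "nat \<Rightarrow> real"
  shows "2 * (\<Sum>k\<in>I. w k) * (\<Sum>k\<in>I. w k * (cmod (y k))\<^sup>2) =
    (\<Sum>k\<in>I. \<Sum>n\<in>I. w k * w n * (cmod (y k - y n))\<^sup>2) + 2 * (cmod (\<Sum>n\<in>I. of_real (w n) * y n))\<^sup>2"
proof -
  note r = var_id_real[where w=w and y="\<lambda>k. Re (y k)" and I=I] var_id_real[where w=w and y="\<lambda>k. Im (y k)" and I=I]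
  have "Re (\<Sum>n\<in>I. of_real (w n) * y n) = (\<Sum>n\<in>I. w n * Re (y n))" by (simp add: Re_sum)
  moreover have "Im (\<Sum>n\<in>I. of_real (w n) * y n) = (\<Sum>n\<in>I. w n * Im (y n))" by (simp add: Im_sum)
  ultimately show ?thesis using r
    by (simp add: cmod_power2 algebra_simps sum.distrib)
qed



definition good :: "(nat \<Rightarrow> complex) \<Rightarrow> real \<Rightarrow> nat set \<Rightarrow> bool" where
  "good \<alpha> e I \<longleftrightarrow> (\<forall>f. (\<Sum>k\<in>I. \<Sum>n\<in>I. wt \<alpha> k * wt \<alpha> n * (cmod (psum f k - psum f n))\<^sup>2)
      \<le> e\<^sup>2 * (\<Sum>k\<in>I. wt \<alpha> k) * (\<Sum>k\<in>I. (cmod (f k))\<^sup>2))"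

lemma good_card_le1:
  assumes "\<And>x y. x \<in> I \<Longrightarrow> y \<in> I \<Longrightarrow> x = y"
  shows "good \<alpha> e I"
  unfolding good_def
proof
  fix f
  have "(\<Sum>k\<in>I. \<Sum>n\<in>I. wt \<alpha> k * wt \<alpha> n * (cmod (psum f k - psum f n))\<^sup>2) = 0"
    by (rule sum.neutral, rule ballI, rule sum.neutral) (auto dest: assms)
  then show "(\<Sum>k\<in>I. \<Sum>n\<in>I. wt \<alpha> k * wt \<alpha> n * (cmod (psum f k - psum f n))\<^sup>2)
      \<le> e\<^sup>2 * (\<Sum>k\<in>I. wt \<alpha> k) * (\<Sum>k\<in>I. (cmod (f k))\<^sup>2)"
    by (simp add: sum_nonneg)
qed

lemma lfun_restrict:
  "l_fun \<alpha> {a..<b} f = l_fun \<alpha> {a..<b} (\<lambda>j. if j \<in> {a..<b} then f j else 0)"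
  unfolding l_fun_def
proof (rule sum.cong[OF refl], rule sum.cong[OF refl])
  fix k n assume "k \<in> {a..<b}" "n \<in> {a..<b} - {k}"
  then have "(\<Sum>j\<in>{min k n + 1..max k n}. f j) = (\<Sum>j\<in>{min k n + 1..max k n}. if j \<in> {a..<b} then f j else 0)"
    by (intro sum.cong) auto
  then show "(cmod (\<alpha> k * \<alpha> n * (\<Sum>j\<in>{min k n + 1..max k n}. f j)))\<^sup>2 =
    (cmod (\<alpha> k * \<alpha> n * (\<Sum>j\<in>{min k n + 1..max k n}. if j \<in> {a..<b} then f j else 0)))\<^sup>2" by simp
qed

lemma lfun_scale:
  "l_fun \<alpha> I (\<lambda>j. g j / of_real c) = l_fun \<alpha> I g / (c\<^sup>2)" for c :: real
  unfolding l_fun_def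
  by (simp add: sum_divide_distrib[symmetric] norm_divide power_divide norm_mult)

lemma lfun_bound:
  assumes h: "norm2_on {a..<b} h \<le> 1" "\<forall>k. k \<notin> {a..<b} \<longrightarrow> h k = 0"
  shows "l_fun \<alpha> {a..<b} h \<le> (\<Sum>k\<in>{a..<b}. \<Sum>n\<in>{a..<b} - {k}. (cmod (\<alpha> k * \<alpha> n) * real b)\<^sup>2)"
  unfolding l_fun_def
proof (intro sum_mono)
  fix k n assume k: "k \<in> {a..<b}" and n: "n \<in> {a..<b} - {k}"
  have hj: "cmod (h j) \<le> 1" for j
  proof (cases "j \<in> {a..<b}")
    case True
    have "(cmod (h j))\<^sup>2 \<le> (\<Sum>i\<in>{a..<b}. (cmod (h i))\<^sup>2)"
      by (rule member_le_sum[OF True]) auto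
    also have "\<dots> = (norm2_on {a..<b} h)\<^sup>2" unfolding norm2_on_def
      by (simp add: sum_nonneg)
    also have "\<dots> \<le> 1" using h(1) unfolding norm2_on_def by (simp add: sum_nonneg)
    finally show ?thesis by (simp add: power_le_one_iff)
  next
    case False then show ?thesis using h(2) by simp
  qed
  have "cmod (\<Sum>j\<in>{min k n + 1..max k n}. h j) \<le> (\<Sum>j\<in>{min k n + 1..max k n}. cmod (h j))"
    by (rule norm_sum)
  also have "\<dots> \<le> of_nat (card {min k n + 1..max k n}) * 1"
    by (rule sum_bounded_above) (use hj in auto)
  also have "\<dots> \<le> real b" using k n by auto
  finally have s: "cmod (\<Sum>j\<in>{min k n + 1..max k n}. h j) \<le> real b" .
  have "cmod (\<alpha> k * \<alpha> n * (\<Sum>j\<in>{min k n + 1..max k n}. h j)) \<le> cmod (\<alpha> k * \<alpha> n) * real b"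
    unfolding norm_mult[of "\<alpha> k * \<alpha> n"] by (rule mult_left_mono[OF s]) simp
  then show "(cmod (\<alpha> k * \<alpha> n * (\<Sum>j\<in>{min k n + 1..max k n}. h j)))\<^sup>2
      \<le> (cmod (\<alpha> k * \<alpha> n) * real b)\<^sup>2"
    by (rule power_mono) simp
qed

lemma L_good:
  assumes L: "L_fun \<alpha> {a..<b} \<le> e"
  shows "good \<alpha> e {a..<b}"
proof (cases "\<forall>k\<in>{a..<b}. \<alpha> k = 0")
  case True
  show ?thesis unfolding good_def
  proof
    fix f
    have "(\<Sum>k\<in>{a..<b}. \<Sum>n\<in>{a..<b}. wt \<alpha> k * wt \<alpha> n * (cmod (psum f k - psum f n))\<^sup>2) = 0"
      using True by (intro sum.neutral ballI) (simp add: wt_def)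
    then show "(\<Sum>k\<in>{a..<b}. \<Sum>n\<in>{a..<b}. wt \<alpha> k * wt \<alpha> n * (cmod (psum f k - psum f n))\<^sup>2)
      \<le> e\<^sup>2 * (\<Sum>k\<in>{a..<b}. wt \<alpha> k) * (\<Sum>k\<in>{a..<b}. (cmod (f k))\<^sup>2)"
      by (simp add: sum_nonneg)
  qed
next
  case False
  define I where "I = {a..<b}"
  define S where "S = {l_fun \<alpha> I f / mu \<alpha> I | f. (\<forall>k. k \<notin> I \<longrightarrow> f k = 0) \<and> norm2_on I f \<le> 1}"
  from False obtain k0 where k0: "k0 \<in> I" "\<alpha> k0 \<noteq> 0" unfolding I_def by auto
  have mu_eq: "mu \<alpha> I = (\<Sum>k\<in>I. wt \<alpha> k)" unfolding mu_def wt_def ..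
  have "0 < wt \<alpha> k0" using k0 by (simp add: wt_def)
  also have "wt \<alpha> k0 \<le> (\<Sum>k\<in>I. wt \<alpha> k)" by (rule member_le_sum[OF k0(1)]) (auto simp: I_def)
  finally have mupos: "0 < mu \<alpha> I" using mu_eq by simp
  have LS: "L_fun \<alpha> I = sqrt (Sup S)" unfolding L_fun_def S_def I_def if_not_P[OF False] ..
  define K where "K = (\<Sum>k\<in>{a..<b}. \<Sum>n\<in>{a..<b} - {k}. (cmod (\<alpha> k * \<alpha> n) * real b)\<^sup>2)"
  have bdd: "bdd_above S"
    unfolding bdd_above_def
  proof (intro exI[of _ "K / mu \<alpha> I"] ballI)
    fix x assume "x \<in> S"
    then obtain h where x: "x = l_fun \<alpha> I h / mu \<alpha> I" and h: "\<forall>k. k \<notin> I \<longrightarrow> h k = 0" "norm2_on I h \<le> 1"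
      unfolding S_def by auto
    have "l_fun \<alpha> I h \<le> K" unfolding K_def I_def by (rule lfun_bound) (use h in \<open>auto simp: I_def\<close>)
    then show "x \<le> K / mu \<alpha> I" unfolding x using mupos by (simp add: divide_right_mono)
  qed
  have z: "0 \<in> S" unfolding S_def
    by (rule CollectI, rule exI[of _ "\<lambda>_. 0"]) (simp add: l_fun_def norm2_on_def)
  have S0: "0 \<le> Sup S" using cSup_upper[OF z bdd] .
  have e0: "0 \<le> e" using L LS S0 by (metis I_def order_trans real_sqrt_ge_zero)
  have "sqrt (Sup S) \<le> e" using L LS by (simp add: I_def)
  then have "(sqrt (Sup S))\<^sup>2 \<le> e\<^sup>2" by (rule power_mono) (simp add: S0)
  then have SupS: "Sup S \<le> e\<^sup>2" using S0 by simp
  show ?thesis unfolding good_def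
  proof
    fix f :: "nat \<Rightarrow> complex"
    define g where "g = (\<lambda>j. if j \<in> I then f j else 0)"
    have lfg: "l_fun \<alpha> I f = l_fun \<alpha> I g" unfolding g_def I_def by (rule lfun_restrict)
    define \<nu> where "\<nu> = norm2_on I f"
    have nug: "norm2_on I g = \<nu>" unfolding \<nu>_def norm2_on_def g_def by (simp cong: sum.cong)
    have nu2: "\<nu>\<^sup>2 = (\<Sum>k\<in>I. (cmod (f k))\<^sup>2)" unfolding \<nu>_def norm2_on_def by (simp add: sum_nonneg)
    have nu0: "0 \<le> \<nu>" unfolding \<nu>_def norm2_on_def by (simp add: sum_nonneg)
    have main: "l_fun \<alpha> I f \<le> e\<^sup>2 * mu \<alpha> I * \<nu>\<^sup>2"
    proof (cases "\<nu> = 0")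
      case True
      then have "(\<Sum>k\<in>I. (cmod (f k))\<^sup>2) = 0" using nu2 by simp
      then have "\<forall>k\<in>I. (cmod (f k))\<^sup>2 = 0" by (subst (asm) sum_nonneg_eq_0_iff) (auto simp: I_def)
      then have "g = (\<lambda>_. 0)" unfolding g_def by auto
      then have "l_fun \<alpha> I f = 0" using lfg by (simp add: l_fun_def)
      then show ?thesis using True by simp
    next
      case nz: False
      then have nupos: "0 < \<nu>" using nu0 by simp
      define h where "h = (\<lambda>j. g j / of_real \<nu>)"
      have lh: "l_fun \<alpha> I h = l_fun \<alpha> I g / \<nu>\<^sup>2" unfolding h_def
        using lfun_scale[of \<alpha> I g \<nu>] by simp
      have nh: "norm2_on I h = 1"
      proof -
        have "norm2_on I h = sqrt ((\<Sum>k\<in>I. (cmod (g k))\<^sup>2) / \<nu>\<^sup>2)"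
          unfolding norm2_on_def h_def by (simp add: norm_divide power_divide sum_divide_distrib)
        also have "\<dots> = norm2_on I g / \<nu>" unfolding norm2_on_def using nupos by (simp add: real_sqrt_divide)
        finally show ?thesis using nug nupos by simp
      qed
      have hs: "\<forall>k. k \<notin> I \<longrightarrow> h k = 0" unfolding h_def g_def by simp
      have "l_fun \<alpha> I h / mu \<alpha> I \<in> S" unfolding S_def using hs nh by auto
      then have "l_fun \<alpha> I h / mu \<alpha> I \<le> e\<^sup>2" using cSup_upper[OF _ bdd] SupS by fastforce
      then have "l_fun \<alpha> I h \<le> e\<^sup>2 * mu \<alpha> I" using mupos by (simp only: pos_divide_le_eq)
      then have "l_fun \<alpha> I g / \<nu>\<^sup>2 \<le> e\<^sup>2 * mu \<alpha> I" using lh by simp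
      moreover have "0 < \<nu>\<^sup>2" using nupos by simp
      ultimately have "l_fun \<alpha> I g \<le> e\<^sup>2 * mu \<alpha> I * \<nu>\<^sup>2" by (simp only: pos_divide_le_eq)
      then show ?thesis using lfg by simp
    qed
    show "(\<Sum>k\<in>{a..<b}. \<Sum>n\<in>{a..<b}. wt \<alpha> k * wt \<alpha> n * (cmod (psum f k - psum f n))\<^sup>2)
      \<le> e\<^sup>2 * (\<Sum>k\<in>{a..<b}. wt \<alpha> k) * (\<Sum>k\<in>{a..<b}. (cmod (f k))\<^sup>2)"
      using main lfun_eq[of I \<alpha> f] mu_eq nu2 unfolding I_def by simp
  qed
qed



lemma sum_tl: "(\<Sum>n<(m::nat). if a \<le> n then h n else 0) = (\<Sum>n\<in>{a..<m}. h n)"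
proof -
  have "(\<Sum>n<m. if a \<le> n then h n else 0) = sum h {n\<in>{..<m}. a \<le> n}"
    by (rule sum.inter_filter[symmetric]) (rule finite_lessThan)
  also have "{n\<in>{..<m}. a \<le> n} = {a..<m}" by auto
  finally show ?thesis .
qed

lemma block_bound:
  assumes "finite I" "good \<alpha> e I"
  shows "(\<Sum>k\<in>I. wt \<alpha> k * (cmod (psum f k - (\<Sum>n\<in>I. of_real (wt \<alpha> n) * psum f n) / of_real (\<Sum>n\<in>I. wt \<alpha> n)))\<^sup>2)
     \<le> e\<^sup>2 / 2 * (\<Sum>k\<in>I. (cmod (f k))\<^sup>2)"
proof -
  define W where "W = (\<Sum>n\<in>I. wt \<alpha> n)"
  define c where "c = (\<Sum>n\<in>I. of_real (wt \<alpha> n) * psum f n) / of_real W"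
  have W0: "0 \<le> W" unfolding W_def by (simp add: sum_nonneg)
  have F0: "0 \<le> (\<Sum>k\<in>I. (cmod (f k))\<^sup>2)" by (simp add: sum_nonneg)
  show ?thesis
  proof (cases "W = 0")
    case True
    then have "\<forall>k\<in>I. wt \<alpha> k = 0" unfolding W_def using assms(1) by (simp add: sum_nonneg_eq_0_iff)
    then have "(\<Sum>k\<in>I. wt \<alpha> k * (cmod (psum f k - c))\<^sup>2) = 0" by simp
    then show ?thesis using F0 unfolding c_def W_def by simp
  next
    case False
    then have Wp: "0 < W" using W0 by simp
    have z: "(\<Sum>n\<in>I. of_real (wt \<alpha> n) * (psum f n - c)) = 0"
    proof -
      have "(\<Sum>n\<in>I. of_real (wt \<alpha> n) * (psum f n - c)) = (\<Sum>n\<in>I. of_real (wt \<alpha> n) * psum f n) - of_real W * c"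
        by (simp add: algebra_simps sum_subtractf sum_distrib_left W_def)
      also have "\<dots> = 0" unfolding c_def using False by simp
      finally show ?thesis .
    qed
    have "2 * W * (\<Sum>k\<in>I. wt \<alpha> k * (cmod (psum f k - c))\<^sup>2) =
      (\<Sum>k\<in>I. \<Sum>n\<in>I. wt \<alpha> k * wt \<alpha> n * (cmod ((psum f k - c) - (psum f n - c)))\<^sup>2)
        + 2 * (cmod (\<Sum>n\<in>I. of_real (wt \<alpha> n) * (psum f n - c)))\<^sup>2"
      unfolding W_def by (rule var_id)
    also have "\<dots> = (\<Sum>k\<in>I. \<Sum>n\<in>I. wt \<alpha> k * wt \<alpha> n * (cmod (psum f k - psum f n))\<^sup>2)"
      using z by simp
    also have "\<dots> \<le> e\<^sup>2 * W * (\<Sum>k\<in>I. (cmod (f k))\<^sup>2)"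
      using assms(2) unfolding good_def W_def by blast
    finally have "2 * W * (\<Sum>k\<in>I. wt \<alpha> k * (cmod (psum f k - c))\<^sup>2) \<le> e\<^sup>2 * W * (\<Sum>k\<in>I. (cmod (f k))\<^sup>2)" .
    then have "(\<Sum>k\<in>I. wt \<alpha> k * (cmod (psum f k - c))\<^sup>2) \<le> e\<^sup>2 / 2 * (\<Sum>k\<in>I. (cmod (f k))\<^sup>2)"
      using Wp by (simp add: field_simps)
    then show ?thesis unfolding c_def W_def .
  qed
qed

lemma lim_le:
  fixes T \<delta> :: "nat \<Rightarrow> real"
  assumes "mono T" "\<And>b. b \<ge> a \<Longrightarrow> T b \<le> C + \<delta> b" "\<delta> \<longlonglongrightarrow> 0"
  shows "T b \<le> C"
proof -
  have "(\<lambda>n. C + \<delta> n) \<longlonglongrightarrow> C + 0" by (intro tendsto_intros assms(3))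
  then have l: "(\<lambda>n. C + \<delta> n) \<longlonglongrightarrow> C" by simp
  have "\<forall>n\<ge>max a b. T b \<le> C + \<delta> n"
  proof (intro allI impI)
    fix n assume "max a b \<le> n"
    then have "T b \<le> T n" "T n \<le> C + \<delta> n" using assms(1,2) by (auto simp: mono_def)
    then show "T b \<le> C + \<delta> n" by simp
  qed
  then show ?thesis using LIMSEQ_le_const[OF l] by blast
qed

definition Wt :: "(nat \<Rightarrow> complex) \<Rightarrow> nat \<Rightarrow> real" where
  "Wt \<alpha> a = (\<Sum>n. if a \<le> n then wt \<alpha> n else 0)"

definition Ct :: "(nat \<Rightarrow> complex) \<Rightarrow> nat \<Rightarrow> (nat \<Rightarrow> complex) \<Rightarrow> complex" where
  "Ct \<alpha> a f = (\<Sum>n. if a \<le> n then of_real (wt \<alpha> n) * psum f n else 0) / of_real (Wt \<alpha> a)"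

lemma summable_wt: "\<alpha> \<in> l2 \<Longrightarrow> summable (\<lambda>n. if a \<le> n then wt \<alpha> n else 0)"
  unfolding l2_def wt_def
  by (rule summable_comparison_test'[where N=0]) auto

lemma Wt_nonneg: "\<alpha> \<in> l2 \<Longrightarrow> 0 \<le> Wt \<alpha> a"
  unfolding Wt_def by (rule suminf_nonneg[OF summable_wt]) auto

lemma tail_summable:
  assumes "\<alpha> \<in> l2" "\<forall>b. good \<alpha> e {a..<b}" "f \<in> l2"
  shows "summable (\<lambda>n. if a \<le> n then of_real (wt \<alpha> n) * psum f n else 0)"
proof (cases "\<forall>n\<ge>a. \<alpha> n = 0")
  case True
  then have "(\<lambda>n. if a \<le> n then of_real (wt \<alpha> n) * psum f n else 0) = (\<lambda>n. 0::complex)"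
    by (auto simp: wt_def)
  then show ?thesis by simp
next
  case False
  then obtain k0 where k0: "a \<le> k0" "\<alpha> k0 \<noteq> 0" by auto
  define w0 where "w0 = wt \<alpha> k0"
  have w0p: "0 < w0" using k0 by (simp add: w0_def wt_def)
  define B where "B = e\<^sup>2 * Wt \<alpha> a * (\<Sum>n. (cmod (f n))\<^sup>2) / w0"
  have sw: "summable (\<lambda>n. if a \<le> n then wt \<alpha> n else 0)" by (rule summable_wt[OF assms(1)])
  have sf: "summable (\<lambda>n. (cmod (f n))\<^sup>2)" using assms(3) unfolding l2_def by simp
  define d where "d = (\<lambda>n. wt \<alpha> n * (cmod (psum f n - psum f k0))\<^sup>2)"
  have d0: "0 \<le> d n" for n unfolding d_def by simp
  have bnd: "(\<Sum>n\<in>{a..<b}. d n) \<le> B" if "k0 < b" for b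
  proof -
    have k0i: "k0 \<in> {a..<b}" using k0 that by auto
    have "w0 * (\<Sum>n\<in>{a..<b}. d n) = (\<Sum>n\<in>{a..<b}. wt \<alpha> k0 * wt \<alpha> n * (cmod (psum f k0 - psum f n))\<^sup>2)"
      unfolding d_def w0_def by (simp add: sum_distrib_left norm_minus_commute mult.assoc)
    also have "\<dots> \<le> (\<Sum>k\<in>{a..<b}. \<Sum>n\<in>{a..<b}. wt \<alpha> k * wt \<alpha> n * (cmod (psum f k - psum f n))\<^sup>2)"
      by (rule member_le_sum[OF k0i, where f="\<lambda>k. \<Sum>n\<in>{a..<b}. wt \<alpha> k * wt \<alpha> n * (cmod (psum f k - psum f n))\<^sup>2"])
        (auto intro!: sum_nonneg)
    also have "\<dots> \<le> e\<^sup>2 * (\<Sum>k\<in>{a..<b}. wt \<alpha> k) * (\<Sum>k\<in>{a..<b}. (cmod (f k))\<^sup>2)"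
      using assms(2) unfolding good_def by blast
    also have "\<dots> \<le> e\<^sup>2 * Wt \<alpha> a * (\<Sum>n. (cmod (f n))\<^sup>2)"
    proof -
      have "(\<Sum>k\<in>{a..<b}. wt \<alpha> k) = (\<Sum>n<b. if a \<le> n then wt \<alpha> n else 0)" by (simp add: sum_tl)
      also have "\<dots> \<le> Wt \<alpha> a" unfolding Wt_def by (rule sum_le_suminf[OF sw]) auto
      finally have 1: "(\<Sum>k\<in>{a..<b}. wt \<alpha> k) \<le> Wt \<alpha> a" .
      have "(\<Sum>k\<in>{a..<b}. (cmod (f k))\<^sup>2) \<le> (\<Sum>k<b. (cmod (f k))\<^sup>2)" by (rule sum_mono2) auto
      also have "\<dots> \<le> (\<Sum>n. (cmod (f n))\<^sup>2)" by (rule sum_le_suminf[OF sf]) auto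
      finally have 2: "(\<Sum>k\<in>{a..<b}. (cmod (f k))\<^sup>2) \<le> (\<Sum>n. (cmod (f n))\<^sup>2)" .
      show ?thesis
        by (intro mult_mono 1 2 mult_nonneg_nonneg sum_nonneg) (auto intro: order_trans[OF _ 1] Wt_nonneg[OF assms(1)])
    qed
    finally show ?thesis unfolding B_def using w0p by (simp add: field_simps)
  qed
  have sd: "summable (\<lambda>n. if a \<le> n then d n else 0)"
  proof (rule summableI_nonneg_bounded[where x=B])
    fix m
    have "(\<Sum>n<m. if a \<le> n then d n else 0) = (\<Sum>n\<in>{a..<m}. d n)" by (rule sum_tl)
    also have "\<dots> \<le> (\<Sum>n\<in>{a..<max m (Suc k0)}. d n)" by (rule sum_mono2) (auto simp: d0)
    also have "\<dots> \<le> B" by (rule bnd) simp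
    finally show "(\<Sum>n<m. if a \<le> n then d n else 0) \<le> B" .
  qed (simp add: d0)
  have "summable (\<lambda>n. (if a \<le> n then wt \<alpha> n else 0) / 2 + (if a \<le> n then d n else 0) / 2
          + (if a \<le> n then wt \<alpha> n else 0) * cmod (psum f k0))"
    by (intro summable_add summable_divide summable_mult2 sw sd)
  then show ?thesis
  proof (rule summable_comparison_test'[where N=0])
    fix n
    show "norm (if a \<le> n then of_real (wt \<alpha> n) * psum f n else 0) \<le>
        (if a \<le> n then wt \<alpha> n else 0) / 2 + (if a \<le> n then d n else 0) / 2
          + (if a \<le> n then wt \<alpha> n else 0) * cmod (psum f k0)"
    proof (cases "a \<le> n")
      case True
      define x where "x = cmod (psum f n - psum f k0)"
      have "cmod (psum f n) \<le> x + cmod (psum f k0)" unfolding x_def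
        by (metis norm_triangle_sub add.commute)
      then have "wt \<alpha> n * cmod (psum f n) \<le> wt \<alpha> n * x + wt \<alpha> n * cmod (psum f k0)"
        by (metis distrib_left mult_left_mono wt_nonneg)
      moreover have "wt \<alpha> n * x \<le> wt \<alpha> n / 2 + wt \<alpha> n * x\<^sup>2 / 2"
      proof -
        have "0 \<le> wt \<alpha> n * (x - 1)\<^sup>2" by simp
        then show ?thesis by (simp add: power2_eq_square algebra_simps)
      qed
      ultimately show ?thesis using True unfolding d_def x_def by (simp add: norm_mult)
    qed simp
  qed
qed

lemma tail_bound:
  assumes "good \<alpha> e {a..<b}"
  shows "(\<Sum>k\<in>{a..<b}. wt \<alpha> k * (cmod (psum f k - c))\<^sup>2) \<le> e\<^sup>2 / 2 * (\<Sum>k\<in>{a..<b}. (cmod (f k))\<^sup>2)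
     + (cmod (\<Sum>n\<in>{a..<b}. of_real (wt \<alpha> n) * (psum f n - c)))\<^sup>2 / (\<Sum>n\<in>{a..<b}. wt \<alpha> n)"
proof -
  define I where "I = {a..<b}"
  define W where "W = (\<Sum>n\<in>I. wt \<alpha> n)"
  define Z where "Z = (cmod (\<Sum>n\<in>I. of_real (wt \<alpha> n) * (psum f n - c)))\<^sup>2"
  have W0: "0 \<le> W" unfolding W_def by (simp add: sum_nonneg)
  have F0: "0 \<le> (\<Sum>k\<in>I. (cmod (f k))\<^sup>2)" by (simp add: sum_nonneg)
  have "Z / W \<ge> 0" unfolding Z_def using W0 by simp
  show ?thesis
  proof (cases "W = 0")
    case True
    then have "\<forall>k\<in>I. wt \<alpha> k = 0" unfolding W_def I_def by (simp add: sum_nonneg_eq_0_iff)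
    then have "(\<Sum>k\<in>I. wt \<alpha> k * (cmod (psum f k - c))\<^sup>2) = 0" by simp
    then show ?thesis using F0 \<open>Z / W \<ge> 0\<close> unfolding I_def W_def Z_def by simp
  next
    case False
    then have Wp: "0 < W" using W0 by simp
    have "2 * W * (\<Sum>k\<in>I. wt \<alpha> k * (cmod (psum f k - c))\<^sup>2) =
      (\<Sum>k\<in>I. \<Sum>n\<in>I. wt \<alpha> k * wt \<alpha> n * (cmod ((psum f k - c) - (psum f n - c)))\<^sup>2) + 2 * Z"
      unfolding W_def Z_def by (rule var_id)
    also have "\<dots> = (\<Sum>k\<in>I. \<Sum>n\<in>I. wt \<alpha> k * wt \<alpha> n * (cmod (psum f k - psum f n))\<^sup>2) + 2 * Z"
      by simp
    also have "\<dots> \<le> e\<^sup>2 * W * (\<Sum>k\<in>I. (cmod (f k))\<^sup>2) + 2 * Z"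
      using assms unfolding good_def W_def I_def by simp
    finally have "2 * W * (\<Sum>k\<in>I. wt \<alpha> k * (cmod (psum f k - c))\<^sup>2) \<le> e\<^sup>2 * W * (\<Sum>k\<in>I. (cmod (f k))\<^sup>2) + 2 * Z" .
    then have "(\<Sum>k\<in>I. wt \<alpha> k * (cmod (psum f k - c))\<^sup>2) \<le> e\<^sup>2 / 2 * (\<Sum>k\<in>I. (cmod (f k))\<^sup>2) + Z / W"
      using Wp by (simp add: field_simps)
    then show ?thesis unfolding I_def W_def Z_def .
  qed
qed

lemma tail_delta:
  assumes "\<alpha> \<in> l2" "\<forall>b. good \<alpha> e {a..<b}" "f \<in> l2"
  shows "(\<lambda>b. (cmod (\<Sum>n\<in>{a..<b}. of_real (wt \<alpha> n) * (psum f n - Ct \<alpha> a f)))\<^sup>2 / (\<Sum>n\<in>{a..<b}. wt \<alpha> n)) \<longlonglongrightarrow> 0"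
proof -
  have sw: "summable (\<lambda>n. if a \<le> n then wt \<alpha> n else 0)" by (rule summable_wt[OF assms(1)])
  have sp: "summable (\<lambda>n. if a \<le> n then of_real (wt \<alpha> n) * psum f n else 0)" by (rule tail_summable[OF assms])
  define S where "S = (\<Sum>n. if a \<le> n then of_real (wt \<alpha> n) * psum f n else (0::complex))"
  have eq: "(\<Sum>n\<in>{a..<b}. of_real (wt \<alpha> n) * (psum f n - Ct \<alpha> a f)) =
      (\<Sum>n<b. if a \<le> n then of_real (wt \<alpha> n) * psum f n else 0) - of_real (\<Sum>n<b. if a \<le> n then wt \<alpha> n else 0) * Ct \<alpha> a f" for b
    by (simp add: sum_tl algebra_simps sum_subtractf sum_distrib_left)
  have eqW: "(\<Sum>n\<in>{a..<b}. wt \<alpha> n) = (\<Sum>n<b. if a \<le> n then wt \<alpha> n else 0)" for b by (simp add: sum_tl)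
  show ?thesis
  proof (cases "Wt \<alpha> a = 0")
    case True
    then have "\<forall>n. (if a \<le> n then wt \<alpha> n else 0) = 0"
      using suminf_eq_zero_iff[OF sw] unfolding Wt_def by simp
    then have "\<forall>n\<ge>a. wt \<alpha> n = 0" by (metis)
    then have "(\<Sum>n\<in>{a..<b}. wt \<alpha> n) = 0" for b by simp
    then show ?thesis by simp
  next
    case False
    have "(\<lambda>b. (cmod ((\<Sum>n<b. if a \<le> n then of_real (wt \<alpha> n) * psum f n else 0) - of_real (\<Sum>n<b. if a \<le> n then wt \<alpha> n else 0) * Ct \<alpha> a f))\<^sup>2 / (\<Sum>n<b. if a \<le> n then wt \<alpha> n else 0))
      \<longlonglongrightarrow> (cmod (S - of_real (Wt \<alpha> a) * Ct \<alpha> a f))\<^sup>2 / Wt \<alpha> a"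
      unfolding S_def Wt_def
      by (intro tendsto_intros summable_LIMSEQ sp sw) (use False in \<open>simp add: Wt_def\<close>)
    moreover have "S - of_real (Wt \<alpha> a) * Ct \<alpha> a f = 0" unfolding Ct_def S_def using False by simp
    ultimately show ?thesis by (simp add: eq eqW)
  qed
qed



definition blk :: "(nat \<Rightarrow> nat) \<Rightarrow> nat \<Rightarrow> nat \<Rightarrow> nat set" where
  "blk s M i = (if i < M then {s i..<s (Suc i)} else {s M..})"

definition psi :: "(nat \<Rightarrow> complex) \<Rightarrow> (nat \<Rightarrow> nat) \<Rightarrow> nat \<Rightarrow> nat \<Rightarrow> (nat \<Rightarrow> complex) \<Rightarrow> complex" where
  "psi \<alpha> s M i f = (if i < M then
     (\<Sum>n\<in>{s i..<s (Suc i)}. of_real (wt \<alpha> n) * psum f n) / of_real (\<Sum>n\<in>{s i..<s (Suc i)}. wt \<alpha> n)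
     else Ct \<alpha> (s M) f)"

definition Pop :: "(nat \<Rightarrow> complex) \<Rightarrow> (nat \<Rightarrow> nat) \<Rightarrow> nat \<Rightarrow> (nat \<Rightarrow> complex) \<Rightarrow> (nat \<Rightarrow> complex)" where
  "Pop \<alpha> s M f = (\<lambda>k. \<Sum>i<Suc M. psi \<alpha> s M i f * (if k \<in> blk s M i then \<alpha> k else 0))"

lemma s_chain:
  assumes "\<forall>i<M. s i \<le> s (Suc i)" "i \<le> j" "j \<le> M"
  shows "s i \<le> (s j :: nat)"
  using assms(2,3)
proof (induction j)
  case 0 then show ?case by simp
next
  case (Suc j)
  show ?case
  proof (cases "i = Suc j")
    case True then show ?thesis by simp
  next
    case False
    then have "s i \<le> s j" using Suc by simp
    also have "s j \<le> s (Suc j)" using assms(1) Suc.prems by simp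
    finally show ?thesis .
  qed
qed

lemma blk_exists:
  fixes s :: "nat \<Rightarrow> nat"
  assumes "s 0 = 0" "k < s m"
  shows "\<exists>i<m. s i \<le> k \<and> k < s (Suc i)"
  using assms(2)
proof (induction m)
  case 0 then show ?case using assms(1) by simp
next
  case (Suc m)
  show ?case
  proof (cases "k < s m")
    case True then show ?thesis using Suc.IH by (meson less_Suc_eq)
  next
    case False then show ?thesis using Suc.prems by auto
  qed
qed

lemma blk_cover:
  fixes s :: "nat \<Rightarrow> nat"
  assumes "s 0 = 0"
  shows "\<exists>i<Suc M. k \<in> blk s M i"
proof (cases "k < s M")
  case True
  then obtain i where "i < M" "s i \<le> k" "k < s (Suc i)" using blk_exists[of s, OF assms True] by blast
  then show ?thesis unfolding blk_def by (intro exI[of _ i]) auto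
next
  case False then show ?thesis unfolding blk_def by (intro exI[of _ M]) auto
qed

lemma blk_disj:
  fixes s :: "nat \<Rightarrow> nat"
  assumes "\<forall>i<M. s i \<le> s (Suc i)" "i < Suc M" "j < Suc M" "k \<in> blk s M i" "k \<in> blk s M j"
  shows "i = j"
proof (rule ccontr)
  assume ne: "i \<noteq> j"
  have *: "False" if "i' < j'" "j' < Suc M" "k \<in> blk s M i'" "k \<in> blk s M j'" for i' j'
  proof -
    have "s (Suc i') \<le> s j'" using s_chain[OF assms(1), of "Suc i'" j'] that by simp
    moreover have "k < s (Suc i')" using that unfolding blk_def by auto
    moreover have "s j' \<le> k" using that unfolding blk_def by (cases "j' < M") (auto simp: not_less less_Suc_eq)
    ultimately show False by simp
  qed
  show False
  proof (cases "i < j")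
    case True then show ?thesis using * assms by blast
  next
    case False then have "j < i" using ne by simp
    then show ?thesis using * assms by blast
  qed
qed

lemma Pop_val:
  fixes s :: "nat \<Rightarrow> nat"
  assumes "\<forall>i<M. s i \<le> s (Suc i)" "i < Suc M" "k \<in> blk s M i"
  shows "Pop \<alpha> s M f k = psi \<alpha> s M i f * \<alpha> k"
proof -
  have "Pop \<alpha> s M f k = (\<Sum>j<Suc M. if j = i then psi \<alpha> s M j f * \<alpha> k else 0)"
    unfolding Pop_def
  proof (rule sum.cong[OF refl])
    fix j assume j: "j \<in> {..<Suc M}"
    show "psi \<alpha> s M j f * (if k \<in> blk s M j then \<alpha> k else 0) = (if j = i then psi \<alpha> s M j f * \<alpha> k else 0)"
    proof -
      have jM: "j < Suc M" using j by simp
      have "k \<in> blk s M j \<longleftrightarrow> j = i" using blk_disj[OF assms(1) jM assms(2) _ assms(3)] assms(3) by blast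
      then show ?thesis by simp
    qed
  qed
  also have "\<dots> = psi \<alpha> s M i f * \<alpha> k" using assms(2) by simp
  finally show ?thesis .
qed

lemma err_val:
  fixes s :: "nat \<Rightarrow> nat"
  assumes "\<forall>i<M. s i \<le> s (Suc i)" "i < Suc M" "k \<in> blk s M i"
  shows "(cmod (R_op \<alpha> f k - Pop \<alpha> s M f k))\<^sup>2 = wt \<alpha> k * (cmod (psum f k - psi \<alpha> s M i f))\<^sup>2"
proof -
  have "R_op \<alpha> f k - Pop \<alpha> s M f k = \<alpha> k * (psum f k - psi \<alpha> s M i f)"
    unfolding Pop_val[OF assms] R_op_def psum_def by (simp add: algebra_simps)
  then show ?thesis by (simp add: norm_mult power_mult_distrib wt_def)
qed

lemma split_blocks:
  fixes s :: "nat \<Rightarrow> nat"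
  assumes "s 0 = 0" "\<forall>i<M. s i \<le> s (Suc i)" "m \<le> M"
  shows "(\<Sum>k<s m. h k) = (\<Sum>i<m. \<Sum>k\<in>{s i..<s (Suc i)}. h k)"
  using assms(3)
proof (induction m)
  case 0 then show ?case using assms(1) by simp
next
  case (Suc m)
  have le: "s m \<le> s (Suc m)" using assms(2) Suc.prems by simp
  have "(\<Sum>k<s (Suc m). h k) = (\<Sum>k\<in>{0..<s (Suc m)}. h k)" by (simp add: atLeast0LessThan)
  also have "\<dots> = (\<Sum>k\<in>{0..<s m}. h k) + (\<Sum>k\<in>{s m..<s (Suc m)}. h k)"
    using sum.atLeastLessThan_concat[of 0 "s m" "s (Suc m)" h] le by simp
  also have "(\<Sum>k\<in>{0..<s m}. h k) = (\<Sum>i<m. \<Sum>k\<in>{s i..<s (Suc i)}. h k)"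
    using Suc by (simp add: atLeast0LessThan)
  finally show ?case by simp
qed



lemma psum_add: "psum (\<lambda>k. f k + g k) n = psum f n + psum g n"
  unfolding psum_def by (simp add: sum.distrib)

lemma psum_scale: "psum (\<lambda>k. c * f k) n = c * psum f n"
  unfolding psum_def by (simp add: sum_distrib_left)

lemma psi_add:
  assumes "\<alpha> \<in> l2" "\<forall>b. good \<alpha> e {s M..<b}" "f \<in> l2" "g \<in> l2"
  shows "psi \<alpha> s M i (\<lambda>k. f k + g k) = psi \<alpha> s M i f + psi \<alpha> s M i g"
proof (cases "i < M")
  case True then show ?thesis unfolding psi_def
    by (simp add: psum_add distrib_left sum.distrib add_divide_distrib)
next
  case False
  have sf: "summable (\<lambda>n. if s M \<le> n then of_real (wt \<alpha> n) * psum f n else 0)" by (rule tail_summable[OF assms(1,2,3)])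
  have sg: "summable (\<lambda>n. if s M \<le> n then of_real (wt \<alpha> n) * psum g n else 0)" by (rule tail_summable[OF assms(1,2,4)])
  have eq: "(\<lambda>n. if s M \<le> n then of_real (wt \<alpha> n) * psum (\<lambda>k. f k + g k) n else 0) =
    (\<lambda>n. (if s M \<le> n then of_real (wt \<alpha> n) * psum f n else 0) + (if s M \<le> n then of_real (wt \<alpha> n) * psum g n else 0))"
    by (auto simp: psum_add distrib_left)
  show ?thesis using False unfolding psi_def Ct_def eq suminf_add[OF sf sg, symmetric]
    by (simp add: add_divide_distrib)
qed

lemma psi_scale:
  assumes "\<alpha> \<in> l2" "\<forall>b. good \<alpha> e {s M..<b}" "f \<in> l2"
  shows "psi \<alpha> s M i (\<lambda>k. c * f k) = c * psi \<alpha> s M i f"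
proof (cases "i < M")
  case True then show ?thesis unfolding psi_def
    by (simp add: psum_scale sum_distrib_left mult.left_commute)
next
  case False
  have sf: "summable (\<lambda>n. if s M \<le> n then of_real (wt \<alpha> n) * psum f n else 0)" by (rule tail_summable[OF assms(1,2,3)])
  have eq: "(\<lambda>n. if s M \<le> n then of_real (wt \<alpha> n) * psum (\<lambda>k. c * f k) n else 0) =
    (\<lambda>n. c * (if s M \<le> n then of_real (wt \<alpha> n) * psum f n else 0))"
    by (auto simp: psum_scale mult.left_commute)
  show ?thesis using False unfolding psi_def Ct_def eq suminf_mult[OF sf]
    by simp
qed

theorem core:
  fixes s :: "nat \<Rightarrow> nat" and e :: real
  assumes l2: "\<alpha> \<in> l2" and e0: "0 \<le> e" and s0: "s 0 = 0" and mono: "\<forall>i<M. s i \<le> s (Suc i)"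
    and gb: "\<forall>i<M. good \<alpha> e {s i..<s (Suc i)}" and gt: "\<forall>b. good \<alpha> e {s M..<b}"
  shows "approx_num (M + 2) (R_op \<alpha>) \<le> ereal (e / sqrt 2)"
proof -
  define P where "P = Pop \<alpha> s M"
  have err: "summable (\<lambda>k. (cmod (R_op \<alpha> f k - P f k))\<^sup>2) \<and>
      (\<Sum>k. (cmod (R_op \<alpha> f k - P f k))\<^sup>2) \<le> e\<^sup>2 / 2 * (\<Sum>k. (cmod (f k))\<^sup>2)" if f: "f \<in> l2" for f
  proof -
    define g where "g = (\<lambda>k. (cmod (R_op \<alpha> f k - P f k))\<^sup>2)"
    define h where "h = (\<lambda>k. (cmod (f k))\<^sup>2)"
    have g0: "0 \<le> g k" for k unfolding g_def by simp
    have h0: "0 \<le> h k" for k unfolding h_def by simp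
    have sf: "summable h" using f unfolding l2_def h_def by simp
    define Fn where "Fn = suminf h"
    have e2: "0 \<le> e\<^sup>2 / 2" by simp
    have fin: "(\<Sum>k<s M. g k) \<le> e\<^sup>2 / 2 * (\<Sum>k<s M. h k)"
    proof -
      have "(\<Sum>k<s M. g k) = (\<Sum>i<M. \<Sum>k\<in>{s i..<s (Suc i)}. g k)" by (rule split_blocks[OF s0 mono]) simp
      also have "\<dots> \<le> (\<Sum>i<M. e\<^sup>2 / 2 * (\<Sum>k\<in>{s i..<s (Suc i)}. h k))"
      proof (rule sum_mono)
        fix i assume i: "i \<in> {..<M}"
        have "(\<Sum>k\<in>{s i..<s (Suc i)}. g k) = (\<Sum>k\<in>{s i..<s (Suc i)}. wt \<alpha> k * (cmod (psum f k -
           (\<Sum>n\<in>{s i..<s (Suc i)}. of_real (wt \<alpha> n) * psum f n) / of_real (\<Sum>n\<in>{s i..<s (Suc i)}. wt \<alpha> n)))\<^sup>2)"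
        proof (rule sum.cong[OF refl])
          fix k assume k: "k \<in> {s i..<s (Suc i)}"
          have kb: "k \<in> blk s M i" using k i unfolding blk_def by simp
          show "g k = wt \<alpha> k * (cmod (psum f k -
           (\<Sum>n\<in>{s i..<s (Suc i)}. of_real (wt \<alpha> n) * psum f n) / of_real (\<Sum>n\<in>{s i..<s (Suc i)}. wt \<alpha> n)))\<^sup>2"
          proof -
            have "g k = wt \<alpha> k * (cmod (psum f k - psi \<alpha> s M i f))\<^sup>2"
              unfolding g_def P_def by (rule err_val[OF mono _ kb]) (use i in simp)
            then show ?thesis using i by (simp add: psi_def)
          qed
        qed
        also have "\<dots> \<le> e\<^sup>2 / 2 * (\<Sum>k\<in>{s i..<s (Suc i)}. h k)" unfolding h_def
          by (rule block_bound) (use gb i in auto)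
        finally show "(\<Sum>k\<in>{s i..<s (Suc i)}. g k) \<le> e\<^sup>2 / 2 * (\<Sum>k\<in>{s i..<s (Suc i)}. h k)" .
      qed
      also have "\<dots> = e\<^sup>2 / 2 * (\<Sum>k<s M. h k)"
        by (simp only: sum_distrib_left[symmetric] split_blocks[OF s0 mono order_refl])
      finally show ?thesis .
    qed
    define \<delta> where "\<delta> = (\<lambda>b. (cmod (\<Sum>n\<in>{s M..<b}. of_real (wt \<alpha> n) * (psum f n - Ct \<alpha> (s M) f)))\<^sup>2 / (\<Sum>n\<in>{s M..<b}. wt \<alpha> n))"
    have dlim: "\<delta> \<longlonglongrightarrow> 0" unfolding \<delta>_def by (rule tail_delta[OF l2 gt f])
    have tl: "(\<Sum>k\<in>{s M..<n}. g k) \<le> e\<^sup>2 / 2 * (\<Sum>k\<in>{s M..<n}. h k) + \<delta> n" for n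
    proof -
      have "(\<Sum>k\<in>{s M..<n}. g k) = (\<Sum>k\<in>{s M..<n}. wt \<alpha> k * (cmod (psum f k - Ct \<alpha> (s M) f))\<^sup>2)"
      proof (rule sum.cong[OF refl])
        fix k assume k: "k \<in> {s M..<n}"
        have kb: "k \<in> blk s M M" using k unfolding blk_def by simp
        show "g k = wt \<alpha> k * (cmod (psum f k - Ct \<alpha> (s M) f))\<^sup>2"
        proof -
          have "g k = wt \<alpha> k * (cmod (psum f k - psi \<alpha> s M M f))\<^sup>2"
            unfolding g_def P_def by (rule err_val[OF mono _ kb]) simp
          then show ?thesis by (simp add: psi_def)
        qed
      qed
      also have "\<dots> \<le> e\<^sup>2 / 2 * (\<Sum>k\<in>{s M..<n}. h k) + \<delta> n"
        unfolding h_def \<delta>_def by (rule tail_bound) (use gt in auto)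
      finally show ?thesis .
    qed
    have spl: "(\<Sum>k<n. q k) = (\<Sum>k<s M. q k) + (\<Sum>k\<in>{s M..<n}. q k)" if "s M \<le> n" for n and q :: "nat \<Rightarrow> real"
      using sum.atLeastLessThan_concat[of 0 "s M" n q] that by (simp add: atLeast0LessThan)
    have bnd: "(\<Sum>k<n. g k) \<le> e\<^sup>2 / 2 * Fn + \<delta> n" if "s M \<le> n" for n
    proof -
      have "(\<Sum>k<n. g k) \<le> e\<^sup>2 / 2 * (\<Sum>k<s M. h k) + (e\<^sup>2 / 2 * (\<Sum>k\<in>{s M..<n}. h k) + \<delta> n)"
        using spl[OF that, of g] fin tl[of n] by simp
      also have "\<dots> = e\<^sup>2 / 2 * (\<Sum>k<n. h k) + \<delta> n"
        using spl[OF that, of h] by (simp add: algebra_simps)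
      also have "\<dots> \<le> e\<^sup>2 / 2 * Fn + \<delta> n"
        unfolding Fn_def by (intro add_right_mono mult_left_mono e2 sum_le_suminf sf) (auto simp: h0)
      finally show ?thesis .
    qed
    have mT: "mono (\<lambda>n. \<Sum>k<n. g k)"
      unfolding mono_def by (intro allI impI sum_mono2) (auto simp: g0)
    have all: "(\<Sum>k<n. g k) \<le> e\<^sup>2 / 2 * Fn" for n
      by (rule lim_le[OF mT _ dlim, of "s M"]) (rule bnd)
    have sg: "summable g" by (rule summableI_nonneg_bounded[OF g0 all])
    have "suminf g \<le> e\<^sup>2 / 2 * Fn" by (rule suminf_le_const[OF sg all])
    then show ?thesis using sg unfolding g_def h_def Fn_def by simp
  qed
  have lin: "l2_linear P"
    unfolding l2_linear_def
  proof (intro conjI ballI allI)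
    fix f assume f: "f \<in> l2"
    define K where "K = (\<Sum>i<Suc M. cmod (psi \<alpha> s M i f))"
    have pk: "cmod (P f k) \<le> K * cmod (\<alpha> k)" for k
    proof -
      have "cmod (P f k) \<le> (\<Sum>i<Suc M. cmod (psi \<alpha> s M i f * (if k \<in> blk s M i then \<alpha> k else 0)))"
        unfolding P_def Pop_def by (rule norm_sum)
      also have "\<dots> \<le> (\<Sum>i<Suc M. cmod (psi \<alpha> s M i f) * cmod (\<alpha> k))"
        by (intro sum_mono) (auto simp: norm_mult)
      also have "\<dots> = K * cmod (\<alpha> k)" unfolding K_def by (rule sum_distrib_right[symmetric])
      finally show ?thesis .
    qed
    have "summable (\<lambda>k. K\<^sup>2 * (cmod (\<alpha> k))\<^sup>2)" using l2 unfolding l2_def by (intro summable_mult) simp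
    then have "summable (\<lambda>k. (cmod (P f k))\<^sup>2)"
    proof (rule summable_comparison_test'[where N=0])
      fix k
      have "(cmod (P f k))\<^sup>2 \<le> (K * cmod (\<alpha> k))\<^sup>2" by (rule power_mono[OF pk]) simp
      then show "norm ((cmod (P f k))\<^sup>2) \<le> K\<^sup>2 * (cmod (\<alpha> k))\<^sup>2" by (simp add: power_mult_distrib)
    qed
    then show "P f \<in> l2" unfolding l2_def by simp
  next
    fix f g assume f: "f \<in> l2" and g: "g \<in> l2"
    show "P (\<lambda>k. f k + g k) = (\<lambda>k. P f k + P g k)"
      unfolding P_def Pop_def psi_add[where s=s and M=M, OF l2 gt f g] by (simp add: distrib_right sum.distrib)
  next
    fix c :: complex and f assume f: "f \<in> l2"
    show "P (\<lambda>k. c * f k) = (\<lambda>k. c * P f k)"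
      unfolding P_def Pop_def psi_scale[where s=s and M=M, OF l2 gt f] by (simp add: sum_distrib_left mult.assoc distrib_left del: sum.lessThan_Suc)
  qed
  have rk: "rank_le P (M + 2 - 1)"
    unfolding rank_le_def
  proof (intro exI[of _ "\<lambda>i k. if k \<in> blk s M i then \<alpha> k else 0"] ballI)
    fix f :: "nat \<Rightarrow> complex"
    show "\<exists>c. P f = (\<lambda>k. \<Sum>i<M + 2 - 1. c i * (if k \<in> blk s M i then \<alpha> k else 0))"
      by (rule exI[of _ "\<lambda>i. psi \<alpha> s M i f"]) (simp add: P_def Pop_def)
  qed
  have "approx_num (M + 2) (R_op \<alpha>) \<le> op_norm (\<lambda>f k. R_op \<alpha> f k - P f k)"
    unfolding approx_num_def by (rule INF_lower) (use lin rk in simp)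
  also have "\<dots> \<le> ereal (e / sqrt 2)"
    unfolding op_norm_def
  proof (rule SUP_least)
    fix f assume "f \<in> {f \<in> l2. l2norm f \<le> 1}"
    then have f: "f \<in> l2" and f1: "l2norm f \<le> 1" by auto
    have Fn1: "(\<Sum>k. (cmod (f k))\<^sup>2) \<le> 1" using f1 unfolding l2norm_def by simp
    have Fn0: "0 \<le> (\<Sum>k. (cmod (f k))\<^sup>2)" using f unfolding l2_def by (intro suminf_nonneg) auto
    note E = err[OF f]
    have inl2: "(\<lambda>k. R_op \<alpha> f k - P f k) \<in> l2" using E unfolding l2_def by simp
    have "l2norm (\<lambda>k. R_op \<alpha> f k - P f k) = sqrt (\<Sum>k. (cmod (R_op \<alpha> f k - P f k))\<^sup>2)"
      unfolding l2norm_def ..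
    also have "\<dots> \<le> sqrt (e\<^sup>2 / 2 * (\<Sum>k. (cmod (f k))\<^sup>2))" using E by simp
    also have "\<dots> \<le> sqrt (e\<^sup>2 / 2)"
      using Fn1 by (intro real_sqrt_le_mono) (simp add: mult_left_le)
    also have "\<dots> = e / sqrt 2" using e0 by (simp add: real_sqrt_divide)
    finally show "(if (\<lambda>k. R_op \<alpha> f k - P f k) \<in> l2 then ereal (l2norm (\<lambda>k. R_op \<alpha> f k - P f k)) else \<infinity>)
        \<le> ereal (e / sqrt 2)" using inl2 by simp
  qed
  finally show ?thesis .
qed



lemma inf_stays: "eps_L_seq \<alpha> \<epsilon> m = \<infinity> \<Longrightarrow> eps_L_seq \<alpha> \<epsilon> (m + d) = \<infinity>"
  by (induction d) auto

lemma fin_before: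
  assumes "eps_L_seq \<alpha> \<epsilon> N \<noteq> \<infinity>" "m \<le> N"
  shows "eps_L_seq \<alpha> \<epsilon> m \<noteq> \<infinity>"
proof
  assume "eps_L_seq \<alpha> \<epsilon> m = \<infinity>"
  then have "eps_L_seq \<alpha> \<epsilon> (m + (N - m)) = \<infinity>" by (rule inf_stays)
  then show False using assms by simp
qed

lemma step_eq:
  assumes "eps_L_seq \<alpha> \<epsilon> m \<noteq> \<infinity>"
  shows "eps_L_seq \<alpha> \<epsilon> (Suc m) =
    (if \<exists>t. t > the_enat (eps_L_seq \<alpha> \<epsilon> m) \<and> L_fun \<alpha> {the_enat (eps_L_seq \<alpha> \<epsilon> m)..t - 1} > \<epsilon>
     then enat (LEAST t. t > the_enat (eps_L_seq \<alpha> \<epsilon> m) \<and> L_fun \<alpha> {the_enat (eps_L_seq \<alpha> \<epsilon> m)..t - 1} > \<epsilon>)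
     else \<infinity>)"
  by (simp only: eps_L_seq.simps(2) if_not_P[OF assms] Let_def)

theorem lemma4p2:
  fixes \<alpha> :: "nat \<Rightarrow> complex" and \<epsilon> :: real and N :: nat
  assumes "\<alpha> \<in> l2" and "\<epsilon> > 0" and "has_finite_length \<alpha> \<epsilon> N"
  shows "approx_num (2 * N + 2) (R_op \<alpha>) \<le> ereal (\<epsilon> / sqrt 2)"
proof -
  define c where "c = (\<lambda>m. the_enat (eps_L_seq \<alpha> \<epsilon> m))"
  have finN: "eps_L_seq \<alpha> \<epsilon> N \<noteq> \<infinity>" and infN: "eps_L_seq \<alpha> \<epsilon> (Suc N) = \<infinity>"
    using assms(3) unfolding has_finite_length_def by auto
  have stepm: "c m < c (Suc m) \<and> (\<forall>t. c m < t \<and> t < c (Suc m) \<longrightarrow> L_fun \<alpha> {c m..t - 1} \<le> \<epsilon>)"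
    if m: "m < N" for m
  proof -
    have f1: "eps_L_seq \<alpha> \<epsilon> m \<noteq> \<infinity>" by (rule fin_before[OF finN]) (use m in simp)
    have f2: "eps_L_seq \<alpha> \<epsilon> (Suc m) \<noteq> \<infinity>" by (rule fin_before[OF finN]) (use m in simp)
    define P where "P = (\<lambda>t. t > c m \<and> L_fun \<alpha> {c m..t - 1} > \<epsilon>)"
    have E: "eps_L_seq \<alpha> \<epsilon> (Suc m) = (if \<exists>t. P t then enat (LEAST t. P t) else \<infinity>)"
      unfolding P_def c_def by (rule step_eq[OF f1])
    have ex: "\<exists>t. P t"
    proof (rule ccontr)
      assume "\<not> (\<exists>t. P t)"
      then have "eps_L_seq \<alpha> \<epsilon> (Suc m) = \<infinity>" unfolding E by simp
      then show False using f2 by simp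
    qed
    have cs: "c (Suc m) = (LEAST t. P t)"
      unfolding c_def E if_P[OF ex] by simp
    have "P (c (Suc m))" unfolding cs by (rule LeastI_ex[OF ex])
    moreover have "\<not> P t" if "t < c (Suc m)" for t using not_less_Least[of t P] that cs by simp
    ultimately show ?thesis unfolding P_def by force
  qed
  have tailN: "L_fun \<alpha> {c N..t - 1} \<le> \<epsilon>" if "c N < t" for t
  proof (rule ccontr)
    assume "\<not> L_fun \<alpha> {c N..t - 1} \<le> \<epsilon>"
    then have ex: "\<exists>t. t > c N \<and> L_fun \<alpha> {c N..t - 1} > \<epsilon>" using that by force
    have E: "eps_L_seq \<alpha> \<epsilon> (Suc N) = (if \<exists>t. t > c N \<and> L_fun \<alpha> {c N..t - 1} > \<epsilon>
       then enat (LEAST t. t > c N \<and> L_fun \<alpha> {c N..t - 1} > \<epsilon>) else \<infinity>)"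
      unfolding c_def by (rule step_eq[OF finN])
    show False using infN unfolding E if_P[OF ex] by simp
  qed
  define s where "s = (\<lambda>i. if even i then c (i div 2) else c (Suc (i div 2)) - 1)"
  have s0: "s 0 = 0" unfolding s_def c_def by (simp add: zero_enat_def)
  have sM: "s (2 * N) = c N" unfolding s_def by simp
  have mono: "\<forall>i<2 * N. s i \<le> s (Suc i)"
  proof (intro allI impI)
    fix i assume i: "i < 2 * N"
    show "s i \<le> s (Suc i)"
    proof (cases "even i")
      case True
      then obtain m where m: "i = 2 * m" by blast
      then have "m < N" using i by simp
      then have "c m < c (Suc m)" using stepm by blast
      then show ?thesis unfolding s_def m by simp
    next
      case False
      then obtain m where m: "i = 2 * m + 1" using oddE by blast
      then have "Suc i = 2 * Suc m" by simp
      then show ?thesis unfolding s_def m by simp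
    qed
  qed
  have gb: "\<forall>i<2 * N. good \<alpha> \<epsilon> {s i..<s (Suc i)}"
  proof (intro allI impI)
    fix i assume i: "i < 2 * N"
    show "good \<alpha> \<epsilon> {s i..<s (Suc i)}"
    proof (cases "even i")
      case True
      then obtain m where m: "i = 2 * m" by blast
      then have mN: "m < N" using i by simp
      have blk: "{s i..<s (Suc i)} = {c m..<c (Suc m) - 1}" unfolding s_def m by simp
      show ?thesis
      proof (cases "c m < c (Suc m) - 1")
        case True
        define t where "t = c (Suc m) - 1"
        have "L_fun \<alpha> {c m..t - 1} \<le> \<epsilon>" using stepm[OF mN] True unfolding t_def by auto
        moreover have "{c m..t - 1} = {c m..<t}" using True unfolding t_def by auto
        ultimately show ?thesis unfolding blk t_def[symmetric] by (intro L_good) simp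
      next
        case False
        then show ?thesis unfolding blk by (intro good_card_le1) auto
      qed
    next
      case False
      then obtain m where m: "i = 2 * m + 1" using oddE by blast
      have "Suc i = 2 * Suc m" using m by simp
      then have blk: "{s i..<s (Suc i)} = {c (Suc m) - 1..<c (Suc m)}" unfolding s_def m by simp
      show ?thesis unfolding blk by (intro good_card_le1) auto
    qed
  qed
  have gt: "\<forall>b. good \<alpha> \<epsilon> {s (2 * N)..<b}"
  proof
    fix b
    show "good \<alpha> \<epsilon> {s (2 * N)..<b}"
    proof (cases "c N < b")
      case True
      then have "L_fun \<alpha> {c N..b - 1} \<le> \<epsilon>" by (rule tailN)
      moreover have "{c N..b - 1} = {c N..<b}" using True by auto
      ultimately show ?thesis unfolding sM by (intro L_good) simp
    next
      case False
      then show ?thesis unfolding sM by (intro good_card_le1) auto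
    qed
  qed
  show ?thesis
    using core[OF assms(1) _ s0 mono gb gt] assms(2) by simp
qed

end
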